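(* Let $\mathcal{G}=(V,E,\lambda)$ be a temporal graph with $m=|E|$ edges, maximum footprint degree $\Delta$, and lifetime of length $\tau$, and let $s\in V$. The procedure that initializes $B_s=\{(\bot,-\infty,\infty)\}$ and $B_v=\emptyset$ for $v\neq s$ and calls $\mathrm{improveNeighbors}(s)$ — where $\mathrm{improveNeighbors}(u)$, for every triplet $(\cdot,a,d)\in B_u$ and every neighbor $v$ of $u$, sets $a'=\min\{t\in\lambda(uv)\mid t\ge a\}$ and $d'=\max\{t\in\lambda(uv)\mid t\le d\}$ and, if $B_v+(u,a',d')\neq B_v$, sets $B_v\gets B_v+(u,a',d')$ and calls $\mathrm{improveNeighbors}(v)$ — runs in time polynomial in the size of the input, namely $O(m\Delta^2\tau^4)$. Here $B+(x,a',d')$ adds the triplet to $B$ unless some $(x,a'',d'')\in B$ has $a''\le a'$ and $d''\ge d'$, and upon adding removes all $(x,a'',d'')$ with $a'\le a''$ and $d'\ge d''$.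
   Context: A temporal graph is $\mathcal{G}=(V,E,\lambda)$ with $V$ finite, $E$ undirected edges, $\lambda:E\to 2^{\mathbb{N}}$ the time labels. The lifetime is the range of time labels, of length $\tau$. $\Delta$ is the maximum number of neighbors of a vertex in the footprint $(V,E)$. It is assumed that, for a given edge, finding the smallest (resp. largest) label within a given time range can be done in time $O(\tau)$ (as holds, e.g., with time-augmented adjacency lists or sequences of adjacency matrices). *)

theory Defs
  imports Main "HOL-Library.Extended_Real"
begin

text \<open>A triplet is (predecessor option, a, d),
  where None plays the role of bottom and a, d are extended reals (to allow -inf, +inf).\<close>

type_synonym 'v trip = "'v option \<times> ereal \<times> ereal"
type_synonym 'v bstate = "'v \<Rightarrow> 'v trip set"

definition temporal_graph :: "'v set \<Rightarrow> 'v set set \<Rightarrow> ('v set \<Rightarrow> nat set) \<Rightarrow> bool" where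
  "temporal_graph V E lam \<longleftrightarrow> finite V \<and>
     (\<forall>e\<in>E. \<exists>u v. u \<in> V \<and> v \<in> V \<and> u \<noteq> v \<and> e = {u, v})"

definition lifetime_within :: "'v set set \<Rightarrow> ('v set \<Rightarrow> nat set) \<Rightarrow> nat \<Rightarrow> bool" where
  "lifetime_within E lam tau \<longleftrightarrow> (\<exists>t0. \<forall>e\<in>E. lam e \<subseteq> {t0..<t0 + tau})"

definition nbrs :: "'v set set \<Rightarrow> 'v \<Rightarrow> 'v set" where
  "nbrs E u = {v. {u, v} \<in> E}"

definition max_degree :: "'v set \<Rightarrow> 'v set set \<Rightarrow> nat" where
  "max_degree V E = Max ((\<lambda>u. card (nbrs E u)) ` V)"

definition add_trip :: "'v trip set \<Rightarrow> 'v trip \<Rightarrow> 'v trip set" where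
  "add_trip B t = (case t of (x, a, d) \<Rightarrow>
     (if \<exists>a'' d''. (x, a'', d'') \<in> B \<and> a'' \<le> a \<and> d'' \<ge> d then B
      else insert (x, a, d) (B - {(x, a'', d'') | a'' d''. a \<le> a'' \<and> d \<ge> d''})))"

text \<open>Candidate labels for a' = min{t in lam(uv) | t >= a} and d' = max{t in lam(uv) | t <= d}.\<close>
definition arr_set :: "('v set \<Rightarrow> nat set) \<Rightarrow> 'v \<Rightarrow> 'v \<Rightarrow> ereal \<Rightarrow> nat set" where
  "arr_set lam u v a = {t \<in> lam {u, v}. ereal (real t) \<ge> a}"

definition dep_set :: "('v set \<Rightarrow> nat set) \<Rightarrow> 'v \<Rightarrow> 'v \<Rightarrow> ereal \<Rightarrow> nat set" where
  "dep_set lam u v d = {t \<in> lam {u, v}. ereal (real t) \<le> d}"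

text \<open>Iteration order of one call improveNeighbors(u): for every triplet of (a snapshot of) B_u,
  in some order, for every neighbour v of u, in some order.\<close>
definition iter_order :: "'v set set \<Rightarrow> 'v bstate \<Rightarrow> 'v \<Rightarrow> ('v trip \<times> 'v) list \<Rightarrow> bool" where
  "iter_order E B u ps \<longleftrightarrow> (\<exists>ts ns. distinct ts \<and> set ts = B u \<and>
      (\<forall>t\<in>set ts. distinct (ns t) \<and> set (ns t) = nbrs E u) \<and>
      ps = concat (map (\<lambda>t. map (Pair t) (ns t)) ts))"

text \<open>Budgeted big-step semantics (all iteration orders allowed).
  call E lam tau k B u r : running improveNeighbors(u) from state B with time budget k
  may end with r = Some (B', k') (finished, remaining budget k') or r = None (budget exhausted).
  Cost model: 1 unit per call; for each (triplet, neighbour) pair, tau units for computing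
  a' and d' (the O(tau) label lookup assumption) plus |{(x,_,_) in B_v. x = u}| + 1 units for computing and
  testing B_v + (u,a',d') (B_v stored grouped by the first component, so only the
  triplets with first component u need to be scanned).  When no label t >= a or no label t <= d exists, the pair is skipped.\<close>
inductive call :: "'v set set \<Rightarrow> ('v set \<Rightarrow> nat set) \<Rightarrow> nat \<Rightarrow> nat \<Rightarrow> 'v bstate \<Rightarrow> 'v
                    \<Rightarrow> ('v bstate \<times> nat) option \<Rightarrow> bool"
  and loop :: "'v set set \<Rightarrow> ('v set \<Rightarrow> nat set) \<Rightarrow> nat \<Rightarrow> nat \<Rightarrow> 'v bstate \<Rightarrow> 'v
                    \<Rightarrow> ('v trip \<times> 'v) list \<Rightarrow> ('v bstate \<times> nat) option \<Rightarrow> bool"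
  for E lam tau where
  call_out: "call E lam tau 0 B u None"
| call_run: "iter_order E B u ps \<Longrightarrow> loop E lam tau k B u ps r \<Longrightarrow> call E lam tau (Suc k) B u r"
| loop_nil: "loop E lam tau k B u [] (Some (B, k))"
| loop_out: "k < tau + card {t \<in> B v. fst t = Some u} + 1 \<Longrightarrow> loop E lam tau k B u (((x, a, d), v) # ps) None"
| loop_skip: "tau + card {t \<in> B v. fst t = Some u} + 1 \<le> k \<Longrightarrow>
     (arr_set lam u v a = {} \<or> dep_set lam u v d = {} \<or>
      add_trip (B v) (Some u, ereal (real (Min (arr_set lam u v a))),
                               ereal (real (Max (dep_set lam u v d)))) = B v) \<Longrightarrow>
     loop E lam tau (k - (tau + card {t \<in> B v. fst t = Some u} + 1)) B u ps r \<Longrightarrow>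
     loop E lam tau k B u (((x, a, d), v) # ps) r"
| loop_rec_out: "tau + card {t \<in> B v. fst t = Some u} + 1 \<le> k \<Longrightarrow>
     arr_set lam u v a \<noteq> {} \<Longrightarrow> dep_set lam u v d \<noteq> {} \<Longrightarrow>
     N = add_trip (B v) (Some u, ereal (real (Min (arr_set lam u v a))),
                                 ereal (real (Max (dep_set lam u v d)))) \<Longrightarrow>
     N \<noteq> B v \<Longrightarrow>
     call E lam tau (k - (tau + card {t \<in> B v. fst t = Some u} + 1)) (B(v := N)) v None \<Longrightarrow>
     loop E lam tau k B u (((x, a, d), v) # ps) None"
| loop_rec: "tau + card {t \<in> B v. fst t = Some u} + 1 \<le> k \<Longrightarrow>
     arr_set lam u v a \<noteq> {} \<Longrightarrow> dep_set lam u v d \<noteq> {} \<Longrightarrow>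
     N = add_trip (B v) (Some u, ereal (real (Min (arr_set lam u v a))),
                                 ereal (real (Max (dep_set lam u v d)))) \<Longrightarrow>
     N \<noteq> B v \<Longrightarrow>
     call E lam tau (k - (tau + card {t \<in> B v. fst t = Some u} + 1)) (B(v := N)) v (Some (B1, k1)) \<Longrightarrow>
     loop E lam tau k1 B1 u ps r \<Longrightarrow>
     loop E lam tau k B u (((x, a, d), v) # ps) r"

definition init_state :: "'v \<Rightarrow> 'v bstate" where
  "init_state s = (\<lambda>v. {})(s := {(None, -\<infinity>, \<infinity>)})"

end

theory Submission
  imports Defs
begin

definition Up :: "'v trip set \<Rightarrow> 'v trip set" where
  "Up S = {(x,a,d). \<exists>a'' d''. (x,a'',d'') \<in> S \<and> a'' \<le> a \<and> d \<le> d''}"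
definition achain :: "'v trip set \<Rightarrow> bool" where
  "achain S \<longleftrightarrow> (\<forall>x a1 d1 a2 d2. (x,a1,d1) \<in> S \<longrightarrow> (x,a2,d2) \<in> S \<longrightarrow> a1 \<le> a2 \<longrightarrow> d2 \<le> d1 \<longrightarrow> a1 = a2 \<and> d1 = d2)"

lemma add_sub: "add_trip S t \<subseteq> insert t S"
  by (cases t) (auto simp: add_trip_def)
lemma add_fin: "finite S \<Longrightarrow> finite (add_trip S t)"
  by (meson add_sub finite_insert finite_subset)
lemma add_achain: "achain S \<Longrightarrow> achain (add_trip S t)"
proof -
  assume A: "achain S"
  obtain x a d where t: "t = (x,a,d)" by (cases t) auto
  show ?thesis
  proof (cases "\<exists>a'' d''. (x, a'', d'') \<in> S \<and> a'' \<le> a \<and> d'' \<ge> d")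
    case True then show ?thesis using A by (simp add: add_trip_def t)
  next
    case False
    have eq: "add_trip S t = insert (x, a, d) (S - {(x, a'', d'') | a'' d''. a \<le> a'' \<and> d \<ge> d''})"
      unfolding add_trip_def t prod.case using False by (rule if_not_P)
    show ?thesis unfolding achain_def
    proof (intro allI impI)
      fix y a1 d1 a2 d2
      assume m1: "(y,a1,d1) \<in> add_trip S t" and m2: "(y,a2,d2) \<in> add_trip S t"
        and le: "a1 \<le> a2" "d2 \<le> d1"
      from m1 have c1: "(y,a1,d1) = (x,a,d) \<or> ((y,a1,d1) \<in> S \<and> \<not>(y = x \<and> a \<le> a1 \<and> d1 \<le> d))"
        unfolding eq by blast
      from m2 have c2: "(y,a2,d2) = (x,a,d) \<or> ((y,a2,d2) \<in> S \<and> \<not>(y = x \<and> a \<le> a2 \<and> d2 \<le> d))"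
        unfolding eq by blast
      show "a1 = a2 \<and> d1 = d2"
        using c1 c2 le False A unfolding achain_def
        by (smt (verit) Pair_inject order.trans)
    qed
  qed
qed
lemma add_Up: "Up S \<subseteq> Up (add_trip S t)"
proof -
  obtain x a d where t: "t = (x,a,d)" by (cases t) auto
  show ?thesis
  proof (cases "\<exists>a'' d''. (x, a'', d'') \<in> S \<and> a'' \<le> a \<and> d'' \<ge> d")
    case True then show ?thesis by (simp add: add_trip_def t)
  next
    case False
    have eq: "add_trip S t = insert (x, a, d) (S - {(x, a'', d'') | a'' d''. a \<le> a'' \<and> d \<ge> d''})"
      unfolding add_trip_def t prod.case using False by (rule if_not_P)
    show ?thesis
    proof
      fix y assume "y \<in> Up S"
      then obtain z a1 d1 a2 d2 where y: "y = (z,a1,d1)" and m: "(z,a2,d2) \<in> S" and le: "a2 \<le> a1" "d1 \<le> d2"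
        unfolding Up_def by blast
      show "y \<in> Up (add_trip S t)"
      proof (cases "z = x \<and> a \<le> a2 \<and> d2 \<le> d")
        case True
        then have "(z,a,d) \<in> add_trip S t" unfolding eq by simp
        then show ?thesis unfolding Up_def y using True le order.trans by blast
      next
        case F2: False
        then have "(z,a2,d2) \<in> add_trip S t" unfolding eq using m by blast
        then show ?thesis unfolding Up_def y using le by blast
      qed
    qed
  qed
qed
lemma add_new: "add_trip S t \<noteq> S \<Longrightarrow> t \<notin> Up S \<and> t \<in> add_trip S t"
proof -
  assume ne: "add_trip S t \<noteq> S"
  obtain x a d where t: "t = (x,a,d)" by (cases t) auto
  show ?thesis
  proof (cases "\<exists>a'' d''. (x, a'', d'') \<in> S \<and> a'' \<le> a \<and> d'' \<ge> d")
    case True then show ?thesis using ne by (simp add: add_trip_def t)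
  next
    case False
    then show ?thesis by (auto simp: add_trip_def t Up_def)
  qed
qed



definition good_trip :: "'v set set \<Rightarrow> ('v set \<Rightarrow> nat set) \<Rightarrow> 'v \<Rightarrow> 'v trip \<Rightarrow> bool" where
  "good_trip E lam w t \<longleftrightarrow> t = (None, -\<infinity>, \<infinity>) \<or>
     (\<exists>u a d. t = (Some u, ereal (real a), ereal (real d)) \<and> {u,w} \<in> E \<and> a \<in> lam {u,w} \<and> d \<in> lam {u,w})"

definition Inv :: "'v set set \<Rightarrow> ('v set \<Rightarrow> nat set) \<Rightarrow> 'v bstate \<Rightarrow> bool" where
  "Inv E lam B \<longleftrightarrow> (\<forall>w. finite (B w) \<and> achain (B w) \<and> (\<forall>t\<in>B w. good_trip E lam w t))"

definition Uset :: "'v set set \<Rightarrow> ('v set \<Rightarrow> nat set) \<Rightarrow> ('v \<times> 'v trip) set" where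
  "Uset E lam = {(w, (Some u, ereal (real a), ereal (real d))) | w u a d.
      {u,w} \<in> E \<and> a \<in> lam {u,w} \<and> d \<in> lam {u,w}}"

definition Pot :: "'v set set \<Rightarrow> ('v set \<Rightarrow> nat set) \<Rightarrow> 'v bstate \<Rightarrow> nat" where
  "Pot E lam B = card (Uset E lam - {(w,t). t \<in> Up (B w)})"

context
  fixes V :: "'v set" and E lam tau
  assumes tg: "temporal_graph V E lam" and lt: "lifetime_within E lam tau" and Vne: "V \<noteq> {}"
begin

lemma finV: "finite V" using tg unfolding temporal_graph_def by (rule conjunct1)

lemma edges: "e \<in> E \<Longrightarrow> \<exists>u v. u \<in> V \<and> v \<in> V \<and> u \<noteq> v \<and> e = {u, v}"
  using tg unfolding temporal_graph_def by (elim conjE) (rule bspec)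

lemma edge_in: "{u,v} \<in> E \<Longrightarrow> u \<in> V \<and> v \<in> V \<and> u \<noteq> v"
proof -
  assume e: "{u,v} \<in> E"
  obtain x y where "x \<in> V" "y \<in> V" "x \<noteq> y" "{u,v} = {x,y}"
    using edges[OF e] by metis
  then show ?thesis by (metis doubleton_eq_iff)
qed

lemma finE: "finite E"
proof -
  have "E \<subseteq> Pow V" using edges by fastforce
  then show ?thesis using finV by (meson finite_Pow_iff finite_subset)
qed

lemma nbrs_sub: "nbrs E u \<subseteq> V" using edge_in unfolding nbrs_def by blast

lemma fin_nbrs: "finite (nbrs E u)" using nbrs_sub finV finite_subset by blast

lemma card_nbrs: "card (nbrs E u) \<le> max_degree V E"
proof (cases "u \<in> V")
  case True then show ?thesis unfolding max_degree_def using finV by (intro Max_ge) auto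
next
  case False
  then have "nbrs E u = {}" using edge_in unfolding nbrs_def by blast
  then show ?thesis by simp
qed

lemma lam_bound: "e \<in> E \<Longrightarrow> finite (lam e) \<and> card (lam e) \<le> tau"
proof -
  assume e: "e \<in> E"
  obtain t0 where "lam e \<subseteq> {t0..<t0+tau}" using lt e unfolding lifetime_within_def by blast
  then show ?thesis by (metis card_atLeastLessThan card_mono diff_add_inverse finite_atLeastLessThan finite_subset)
qed

lemma group_bound:
  assumes I: "Inv E lam B"
  shows "card {t \<in> B v. fst t = Some u} \<le> tau"
proof (cases "{u,v} \<in> E")
  case False
  have "{t \<in> B v. fst t = Some u} = {}"
  proof (rule ccontr)
    assume "{t \<in> B v. fst t = Some u} \<noteq> {}"
    then obtain t where "t \<in> B v" "fst t = Some u" by blast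
    moreover have "good_trip E lam v t" using I \<open>t \<in> B v\<close> unfolding Inv_def by blast
    ultimately show False using False unfolding good_trip_def by auto
  qed
  then show ?thesis by (metis card.empty zero_le)
next
  case True
  let ?G = "{t \<in> B v. fst t = Some u}"
  have fin: "finite ?G" using I unfolding Inv_def by simp
  have inj: "inj_on (\<lambda>t. fst (snd t)) ?G"
  proof (rule inj_onI)
    fix t1 t2 assume m: "t1 \<in> ?G" "t2 \<in> ?G" and eqa: "fst (snd t1) = fst (snd t2)"
    have ac: "achain (B v)" using I unfolding Inv_def by simp
    obtain x1 a1 d1 where t1: "t1 = (x1,a1,d1)" by (cases t1) auto
    obtain x2 a2 d2 where t2: "t2 = (x2,a2,d2)" by (cases t2) auto
    have x: "x1 = x2" "a1 = a2" using m eqa t1 t2 by auto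
    have "(x1,a1,d1) \<in> B v" "(x1,a2,d2) \<in> B v" using m t1 t2 x by auto
    then have "d1 = d2"
    proof (cases "d1 \<le> d2")
      case True then show ?thesis using ac \<open>(x1,a1,d1) \<in> B v\<close> \<open>(x1,a2,d2) \<in> B v\<close> x
        unfolding achain_def by (metis order_refl)
    next
      case False then have "d2 \<le> d1" by simp
      then show ?thesis using ac \<open>(x1,a1,d1) \<in> B v\<close> \<open>(x1,a2,d2) \<in> B v\<close> x
        unfolding achain_def by (metis order_refl)
    qed
    then show "t1 = t2" using t1 t2 x by simp
  qed
  have "(\<lambda>t. fst (snd t)) ` ?G \<subseteq> (\<lambda>a. ereal (real a)) ` lam {u,v}"
  proof
    fix y assume "y \<in> (\<lambda>t. fst (snd t)) ` ?G"
    then obtain t where t: "t \<in> B v" "fst t = Some u" "y = fst (snd t)" by blast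
    then have "good_trip E lam v t" using I unfolding Inv_def by blast
    then show "y \<in> (\<lambda>a. ereal (real a)) ` lam {u,v}" using t unfolding good_trip_def by auto
  qed
  then have "card ((\<lambda>t. fst (snd t)) ` ?G) \<le> card (lam {u,v})"
    using lam_bound[OF True] by (meson card_image_le card_mono finite_imageI le_trans)
  then show ?thesis using card_image[OF inj] lam_bound[OF True] by linarith
qed

lemma B_bound:
  assumes I: "Inv E lam B"
  shows "card (B u) \<le> 1 + max_degree V E * tau"
proof -
  have sub: "B u \<subseteq> {(None, -\<infinity>, \<infinity>)} \<union> (\<Union>w\<in>nbrs E u. {t \<in> B u. fst t = Some w})"
  proof
    fix t assume t: "t \<in> B u"
    then have "good_trip E lam u t" using I unfolding Inv_def by blast
    then show "t \<in> {(None, -\<infinity>, \<infinity>)} \<union> (\<Union>w\<in>nbrs E u. {t \<in> B u. fst t = Some w})"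
      using t unfolding good_trip_def nbrs_def by (auto simp: insert_commute)
  qed
  have "card (B u) \<le> card ({(None, -\<infinity>, \<infinity>)} \<union> (\<Union>w\<in>nbrs E u. {t \<in> B u. fst t = Some w}))"
    using sub I fin_nbrs unfolding Inv_def by (intro card_mono) auto
  also have "\<dots> \<le> 1 + card (\<Union>w\<in>nbrs E u. {t \<in> B u. fst t = Some w})"
    using card_Un_le[of "{(None, -\<infinity>, \<infinity>)}"] by simp
  also have "card (\<Union>w\<in>nbrs E u. {t \<in> B u. fst t = Some w}) \<le> (\<Sum>w\<in>nbrs E u. card {t \<in> B u. fst t = Some w})"
    by (rule card_UN_le[OF fin_nbrs])
  also have "\<dots> \<le> card (nbrs E u) * tau"
    using sum_bounded_above[of "nbrs E u" "\<lambda>w. card {t \<in> B u. fst t = Some w}" tau] group_bound[OF I] by simp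
  also have "\<dots> \<le> max_degree V E * tau" using card_nbrs by simp
  finally show ?thesis by simp
qed

end



lemma Up_refl: "t \<in> S \<Longrightarrow> t \<in> Up S"
  by (cases t) (auto simp: Up_def)

lemma iter_len:
  assumes "iter_order E B u ps"
  shows "length ps = card (B u) * card (nbrs E u) \<and> (\<forall>p\<in>set ps. snd p \<in> nbrs E u)"
proof -
  obtain ts ns where d: "distinct ts" "set ts = B u"
     and n: "\<forall>t\<in>set ts. distinct (ns t) \<and> set (ns t) = nbrs E u"
     and ps: "ps = concat (map (\<lambda>t. map (Pair t) (ns t)) ts)"
    using assms unfolding iter_order_def by blast
  have "length ps = sum_list (map (\<lambda>t. length (ns t)) ts)"
    unfolding ps by (simp add: length_concat comp_def)
  also have "map (\<lambda>t. length (ns t)) ts = map (\<lambda>t. card (nbrs E u)) ts"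
    using n distinct_card by (metis (no_types, lifting) map_eq_conv)
  also have "sum_list (map (\<lambda>t. card (nbrs E u)) ts) = length ts * card (nbrs E u)"
    by (simp add: sum_list_triv)
  also have "length ts = card (B u)" using d distinct_card by metis
  finally have 1: "length ps = card (B u) * card (nbrs E u)" .
  have 2: "\<forall>p\<in>set ps. snd p \<in> nbrs E u" unfolding ps using n by auto
  show ?thesis using 1 2 by blast
qed

context
  fixes V :: "'v set" and E lam tau
  assumes tg: "temporal_graph V E lam" and lt: "lifetime_within E lam tau" and Vne: "V \<noteq> {}"
begin

lemma Uset_fin_card: "finite (Uset E lam) \<and> card (Uset E lam) \<le> 4 * card E * tau^2"
proof -
  let ?f = "\<lambda>(w,u,a,d). (w, (Some u, ereal (real a), ereal (real d)))"
  let ?A = "\<lambda>e. ?f ` (e \<times> e \<times> lam e \<times> lam e)"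
  have sub: "Uset E lam \<subseteq> (\<Union>e\<in>E. ?A e)"
  proof
    fix y assume "y \<in> Uset E lam"
    then obtain w u a d where y: "y = (w, (Some u, ereal (real a), ereal (real d)))"
      and m: "{u,w} \<in> E" "a \<in> lam {u,w}" "d \<in> lam {u,w}"
      unfolding Uset_def by blast
    have "(w,u,a,d) \<in> {u,w} \<times> {u,w} \<times> lam {u,w} \<times> lam {u,w}" using m by simp
    then have "y \<in> ?A {u,w}" unfolding y by force
    then show "y \<in> (\<Union>e\<in>E. ?A e)" using m(1) by blast
  qed
  have finA: "finite (?A e)" if eE: "e \<in> E" for e
  proof -
    obtain x z where "e = {x,z}" using edges[OF tg lt Vne eE] by blast
    then show ?thesis using lam_bound[OF tg lt Vne eE] by simp
  qed
  have cardA: "card (?A e) \<le> 4 * tau^2" if eE: "e \<in> E" for e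
  proof -
    obtain x z where ez: "e = {x,z}" using edges[OF tg lt Vne eE] by blast
    have ce: "card e \<le> 2" unfolding ez by (simp add: card_insert_if)
    have lb: "finite (lam e)" "card (lam e) \<le> tau" using lam_bound[OF tg lt Vne eE] by auto
    have "card (?A e) \<le> card (e \<times> e \<times> lam e \<times> lam e)" by (rule card_image_le) (use lb ez in \<open>simp add: finite_cartesian_product\<close>)
    also have "\<dots> = card e * card e * card (lam e) * card (lam e)"
      by (simp add: card_cartesian_product)
    also have "\<dots> \<le> 2 * 2 * tau * tau"
      using ce lb by (intro mult_le_mono) auto
    finally show ?thesis by (simp add: power2_eq_square)
  qed
  have fin: "finite (\<Union>e\<in>E. ?A e)" using finE[OF tg lt Vne] finA by blast
  have "card (Uset E lam) \<le> card (\<Union>e\<in>E. ?A e)" using sub fin by (rule card_mono[rotated])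
  also have "\<dots> \<le> (\<Sum>e\<in>E. card (?A e))" by (rule card_UN_le[OF finE[OF tg lt Vne]])
  also have "\<dots> \<le> card E * (4 * tau^2)"
    using sum_bounded_above[of E "\<lambda>e. card (?A e)" "4 * tau^2"] cardA by simp
  finally show ?thesis using sub fin finite_subset by auto
qed

lemma step:
  assumes I: "Inv E lam B" and e: "{u,v} \<in> E" and a: "a \<in> lam {u,v}" and d: "d \<in> lam {u,v}"
    and N: "N = add_trip (B v) (Some u, ereal (real a), ereal (real d))" and ne: "N \<noteq> B v"
  shows "Inv E lam (B(v:=N)) \<and> Pot E lam (B(v:=N)) < Pot E lam B"
proof
  let ?t = "(Some u, ereal (real a), ereal (real d))"
  have gt: "good_trip E lam v ?t" unfolding good_trip_def using e a d by blast
  have Iv: "finite (B v) \<and> achain (B v) \<and> (\<forall>t\<in>B v. good_trip E lam v t)" using I unfolding Inv_def by blast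
  have "finite N \<and> achain N \<and> (\<forall>t\<in>N. good_trip E lam v t)"
    using Iv add_fin add_achain add_sub[of "B v" ?t] gt unfolding N by blast
  then show "Inv E lam (B(v:=N))" using I unfolding Inv_def by simp
  let ?X = "\<lambda>B. {(w,t). t \<in> Up (B w)}"
  have sub: "?X B \<subseteq> ?X (B(v:=N))" using add_Up[of "B v" ?t] unfolding N by auto
  have new: "?t \<notin> Up (B v)" "?t \<in> N" using add_new[of "B v" ?t] ne unfolding N by auto
  have inU: "(v, ?t) \<in> Uset E lam" unfolding Uset_def using e a d by blast
  have i1: "(v,?t) \<in> Uset E lam - ?X B" using inU new by simp
  have i2: "(v,?t) \<notin> Uset E lam - ?X (B(v:=N))" using Up_refl[of ?t N] new by simp
  have "Uset E lam - ?X (B(v:=N)) \<subset> Uset E lam - ?X B"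
  proof (rule psubsetI)
    show "Uset E lam - ?X (B(v:=N)) \<subseteq> Uset E lam - ?X B" using sub by blast
    show "Uset E lam - ?X (B(v:=N)) \<noteq> Uset E lam - ?X B" using i1 i2 by blast
  qed
  then show "Pot E lam (B(v:=N)) < Pot E lam B" unfolding Pot_def
    using Uset_fin_card by (intro psubset_card_mono) auto
qed

end



context
  fixes V :: "'v set" and E lam tau
  assumes tg: "temporal_graph V E lam" and lt: "lifetime_within E lam tau" and Vne: "V \<noteq> {}"
begin

lemma newtrip:
  assumes v: "v \<in> nbrs E u" and ar: "arr_set lam u v a \<noteq> {}" and dp: "dep_set lam u v d \<noteq> {}"
  shows "{u,v} \<in> E \<and> Min (arr_set lam u v a) \<in> lam {u,v} \<and> Max (dep_set lam u v d) \<in> lam {u,v}"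
proof -
  have e: "{u,v} \<in> E" using v unfolding nbrs_def by simp
  have f: "finite (lam {u,v})" using lam_bound[OF tg lt Vne e] by simp
  have fa: "finite (arr_set lam u v a)" using f unfolding arr_set_def by simp
  have fd: "finite (dep_set lam u v d)" using f unfolding dep_set_def by simp
  have "Min (arr_set lam u v a) \<in> arr_set lam u v a" using fa ar by (rule Min_in)
  moreover have "Max (dep_set lam u v d) \<in> dep_set lam u v d" using fd dp by (rule Max_in)
  ultimately show ?thesis using e unfolding arr_set_def dep_set_def by simp
qed

lemma main:
  fixes c e :: nat
  assumes ce0: "\<forall>B u. Inv E lam B \<longrightarrow> e * (card (B u) * card (nbrs E u)) + 1 \<le> c"
    and ee0: "\<forall>B u v. Inv E lam B \<longrightarrow> tau + card {t\<in>B v. fst t = Some u} + 1 \<le> e"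
  shows "call E lam tau k B u r \<Longrightarrow> Inv E lam B \<Longrightarrow> c * Pot E lam B + c \<le> k \<Longrightarrow>
           (\<exists>B1 k1. r = Some (B1,k1) \<and> Inv E lam B1 \<and> k + c * Pot E lam B1 \<le> k1 + c * Pot E lam B + c)"
    and "loop E lam tau k B u ps r \<Longrightarrow> Inv E lam B \<Longrightarrow> (\<forall>p\<in>set ps. snd p \<in> nbrs E u) \<Longrightarrow>
           e * length ps + c * Pot E lam B \<le> k \<Longrightarrow>
           (\<exists>B1 k1. r = Some (B1,k1) \<and> Inv E lam B1 \<and> k + c * Pot E lam B1 \<le> k1 + e * length ps + c * Pot E lam B)"
proof -
  note ce = ce0[rule_format] and ee = ee0[rule_format]
  show "call E lam tau k B u r \<Longrightarrow> Inv E lam B \<Longrightarrow> c * Pot E lam B + c \<le> k \<Longrightarrow>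
           (\<exists>B1 k1. r = Some (B1,k1) \<and> Inv E lam B1 \<and> k + c * Pot E lam B1 \<le> k1 + c * Pot E lam B + c)"
    and "loop E lam tau k B u ps r \<Longrightarrow> Inv E lam B \<Longrightarrow> (\<forall>p\<in>set ps. snd p \<in> nbrs E u) \<Longrightarrow>
           e * length ps + c * Pot E lam B \<le> k \<Longrightarrow>
           (\<exists>B1 k1. r = Some (B1,k1) \<and> Inv E lam B1 \<and> k + c * Pot E lam B1 \<le> k1 + e * length ps + c * Pot E lam B)"
proof (induction rule: call_loop.inducts)
  case (call_out B u)
  then show ?case using ce[OF call_out.prems(1), of u] by simp
next
  case (call_run B u ps k r)
  have L: "length ps = card (B u) * card (nbrs E u)" "\<forall>p\<in>set ps. snd p \<in> nbrs E u"
    using iter_len[OF \<open>iter_order E B u ps\<close>] by auto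
  have c1: "e * length ps + 1 \<le> c" using ce[OF call_run.prems(1)] L(1) by simp
  have "e * length ps + c * Pot E lam B \<le> k" using c1 call_run.prems(2) by linarith
  then obtain B1 k1 where r: "r = Some (B1,k1)" "Inv E lam B1"
     "k + c * Pot E lam B1 \<le> k1 + e * length ps + c * Pot E lam B"
    using call_run(3) call_run.prems(1) L(2) by blast
  show ?case using r c1 by auto
next
  case (loop_nil k B u)
  then show ?case by simp
next
  case (loop_out k B v u x a d ps)
  have "tau + card {t \<in> B v. fst t = Some u} + 1 \<le> e" using ee[OF loop_out.prems(1)] .
  then show ?case using loop_out by simp
next
  case (loop_skip B v u k a d ps r x)
  let ?cost = "tau + card {t \<in> B v. fst t = Some u} + 1"
  have ec: "?cost \<le> e" using ee[OF loop_skip.prems(1)] .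
  have kk: "k - ?cost + ?cost = k" using \<open>?cost \<le> k\<close> by simp
  have "e * length ps + c * Pot E lam B \<le> k - ?cost" using loop_skip.prems(3) ec kk by simp
  then obtain B1 k1 where r: "r = Some (B1,k1)" "Inv E lam B1"
     "k - ?cost + c * Pot E lam B1 \<le> k1 + e * length ps + c * Pot E lam B"
    using loop_skip(4) loop_skip.prems(1,2) by auto
  show ?case using r ec kk by auto
next
  case (loop_rec_out B v u k a d N x ps)
  let ?cost = "tau + card {t \<in> B v. fst t = Some u} + 1"
  have ec: "?cost \<le> e" using ee[OF loop_rec_out.prems(1)] .
  have kk: "k - ?cost + ?cost = k" using \<open>?cost \<le> k\<close> by simp
  have v: "v \<in> nbrs E u" using loop_rec_out.prems(2) by simp
  have nt: "{u,v} \<in> E \<and> Min (arr_set lam u v a) \<in> lam {u,v} \<and> Max (dep_set lam u v d) \<in> lam {u,v}"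
    using newtrip[OF v \<open>arr_set lam u v a \<noteq> {}\<close> \<open>dep_set lam u v d \<noteq> {}\<close>] .
  have st: "Inv E lam (B(v:=N)) \<and> Pot E lam (B(v:=N)) < Pot E lam B"
    using step[OF tg lt Vne loop_rec_out.prems(1)] nt \<open>N = add_trip (B v) (Some u, ereal (real (Min (arr_set lam u v a))), ereal (real (Max (dep_set lam u v d))))\<close> \<open>N \<noteq> B v\<close> by blast
  have "c * (Pot E lam (B(v:=N)) + 1) \<le> c * Pot E lam B" using st by (intro mult_le_mono2) simp
  then have "c * Pot E lam (B(v:=N)) + c \<le> k - ?cost" using loop_rec_out.prems(3) ec kk by simp
  from loop_rec_out(6)[OF conjunct1[OF st] this] show ?case by simp
next
  case (loop_rec B v u k a d N B1 k1 ps r x)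
  let ?cost = "tau + card {t \<in> B v. fst t = Some u} + 1"
  have ec: "?cost \<le> e" using ee[OF loop_rec.prems(1)] .
  have kk: "k - ?cost + ?cost = k" using \<open>?cost \<le> k\<close> by simp
  have v: "v \<in> nbrs E u" using loop_rec.prems(2) by simp
  have nt: "{u,v} \<in> E \<and> Min (arr_set lam u v a) \<in> lam {u,v} \<and> Max (dep_set lam u v d) \<in> lam {u,v}"
    using newtrip[OF v \<open>arr_set lam u v a \<noteq> {}\<close> \<open>dep_set lam u v d \<noteq> {}\<close>] .
  have st: "Inv E lam (B(v:=N)) \<and> Pot E lam (B(v:=N)) < Pot E lam B"
    using step[OF tg lt Vne loop_rec.prems(1)] nt \<open>N = add_trip (B v) (Some u, ereal (real (Min (arr_set lam u v a))), ereal (real (Max (dep_set lam u v d))))\<close> \<open>N \<noteq> B v\<close> by blast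
  have m: "c * (Pot E lam (B(v:=N)) + 1) \<le> c * Pot E lam B" using st by (intro mult_le_mono2) simp
  then have "c * Pot E lam (B(v:=N)) + c \<le> k - ?cost" using loop_rec.prems(3) ec kk by simp
  from loop_rec(6)[OF conjunct1[OF st] this]
  have r1: "Inv E lam B1" "k - ?cost + c * Pot E lam B1 \<le> k1 + c * Pot E lam (B(v:=N)) + c"
    by (auto simp only: option.inject prod.inject)
  have "e * length ps + c * Pot E lam B1 \<le> k1" using r1(2) m loop_rec.prems(3) ec kk by simp
  then obtain B2 k2 where r2: "r = Some (B2,k2)" "Inv E lam B2"
     "k1 + c * Pot E lam B2 \<le> k2 + e * length ps + c * Pot E lam B1"
    using loop_rec(8) r1(1) loop_rec.prems(2) by auto
  show ?case using r2 r1 m ec kk by auto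
qed
qed

end



definition okr :: "nat \<Rightarrow> ('v bstate \<times> nat) option \<Rightarrow> bool" where
  "okr k r \<longleftrightarrow> (\<forall>B1 k1. r = Some (B1,k1) \<longrightarrow> (\<forall>w. finite (B1 w)) \<and> k1 \<le> k)"

lemma iter_exists:
  assumes "finite (B u)" "finite (nbrs E u)"
  shows "\<exists>ps. iter_order E B u ps"
proof -
  obtain ts where ts: "distinct ts" "set ts = B u" using finite_distinct_list[OF assms(1)] by blast
  obtain ns where ns: "distinct ns" "set ns = nbrs E u" using finite_distinct_list[OF assms(2)] by blast
  show ?thesis unfolding iter_order_def
    by (rule exI[of _ "concat (map (\<lambda>t. map (Pair t) ((\<lambda>_. ns) t)) ts)"], rule exI[of _ ts],
        rule exI[of _ "\<lambda>_. ns"]) (use ts ns in auto)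
qed

lemma total:
  fixes E :: "'v set set"
  assumes fn: "\<And>u. finite (nbrs E u)"
  shows "\<forall>B u ps. (\<forall>w. finite (B w)) \<longrightarrow>
     (\<exists>r. call E lam tau k B u r \<and> okr k r) \<and> (\<exists>r. loop E lam tau k B u ps r \<and> okr k r)"
proof (induction k rule: less_induct)
  case (less k)
  show ?case
  proof (intro allI impI conjI)
    fix B :: "'v bstate" and u ps assume fB: "\<forall>w. finite (B w)"
    show "\<exists>r. call E lam tau k B u r \<and> okr k r"
    proof (cases k)
      case 0
      have "call E lam tau k B u None" unfolding 0 by (rule call_out)
      moreover have "okr k None" by (simp add: okr_def)
      ultimately show ?thesis by blast
    next
      case (Suc k')
      obtain ps0 where ps0: "iter_order E B u ps0" using iter_exists[of B u E] fB fn by blast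
      obtain r where r: "loop E lam tau k' B u ps0 r" "okr k' r" using less.IH[of k'] Suc fB by blast
      have "call E lam tau k B u r" using call_run[OF ps0 r(1)] Suc by simp
      moreover have "okr k r" using r(2) Suc unfolding okr_def by auto
      ultimately show ?thesis by blast
    qed
    show "\<exists>r. loop E lam tau k B u ps r \<and> okr k r"
    proof (cases ps)
      case Nil
      then show ?thesis using loop_nil[of E lam tau k B u] fB unfolding okr_def by auto
    next
      case (Cons p rest)
      obtain x a d v where p: "p = ((x,a,d),v)" by (metis prod.collapse)
      let ?cost = "tau + card {t \<in> B v. fst t = Some u} + 1"
      let ?N = "add_trip (B v) (Some u, ereal (real (Min (arr_set lam u v a))), ereal (real (Max (dep_set lam u v d))))"
      show ?thesis
      proof (cases "k < ?cost")
        case True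
        have "loop E lam tau k B u (((x, a, d), v) # rest) None" using True by (rule loop_out)
        moreover have "okr k None" by (simp add: okr_def)
        ultimately show ?thesis using Cons p by blast
      next
        case F1: False
        then have lt1: "k - ?cost < k" by simp
        have F1': "?cost \<le> k" using F1 by linarith
        show ?thesis
        proof (cases "arr_set lam u v a = {} \<or> dep_set lam u v d = {} \<or> ?N = B v")
          case True
          obtain r where r: "loop E lam tau (k - ?cost) B u rest r" "okr (k - ?cost) r"
            using less.IH[OF lt1] fB by blast
          have "loop E lam tau k B u (((x, a, d), v) # rest) r"
            by (rule loop_skip[OF F1' True r(1)])
          moreover have "okr k r" using r(2) unfolding okr_def by auto
          ultimately show ?thesis using Cons p by blast
        next
          case F2: False
          have F2': "arr_set lam u v a \<noteq> {}" "dep_set lam u v d \<noteq> {}" "?N \<noteq> B v" using F2 by blast+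
          have "finite ?N" by (rule add_fin) (use fB in blast)
          then have fB': "\<forall>w. finite ((B(v := ?N)) w)" using fB by simp
          obtain r1 where r1: "call E lam tau (k - ?cost) (B(v := ?N)) v r1" "okr (k - ?cost) r1"
            using less.IH[OF lt1] fB' by blast
          show ?thesis
          proof (cases r1)
            case None
            have "loop E lam tau k B u (((x, a, d), v) # rest) None"
              by (rule loop_rec_out[OF F1' F2'(1) F2'(2) refl F2'(3) r1(1)[unfolded None]])
            then show ?thesis using Cons p unfolding okr_def by auto
          next
            case (Some q)
            obtain B1 k1 where q: "q = (B1,k1)" by (cases q)
            have fB1: "\<forall>w. finite (B1 w)" and kk1: "k1 \<le> k - ?cost"
              using r1(2) Some q unfolding okr_def by auto
            have lt2: "k1 < k" using kk1 lt1 by linarith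
            obtain r where r: "loop E lam tau k1 B1 u rest r" "okr k1 r"
              using less.IH[OF lt2] fB1 by blast
            have "loop E lam tau k B u (((x, a, d), v) # rest) r"
              by (rule loop_rec[OF F1' F2'(1) F2'(2) refl F2'(3) r1(1)[unfolded Some q] r(1)])
            moreover have "okr k r" using r(2) lt2 unfolding okr_def by auto
            ultimately show ?thesis using Cons p by blast
          qed
        qed
      qed
    qed
  qed
qed

lemma arith_bound:
  fixes D m t :: nat
  assumes "1 \<le> D" "1 \<le> m" "1 \<le> t"
  shows "(1 + (2*t+1)*((1+D*t)*D)) * (4*m*t^2 + 1) \<le> 35*(1 + m*D^2*t^4)"
proof -
  have a: "2*t+1 \<le> 3*t" using assms by simp
  have b: "1+D*t \<le> 2*(D*t)" using assms by (simp add: Suc_le_eq)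
  have "(2*t+1)*((1+D*t)*D) \<le> (3*t)*((2*(D*t))*D)"
    using a b by (intro mult_le_mono) auto
  also have "\<dots> = 6*(D^2*t^2)" by (simp add: power2_eq_square)
  finally have c: "(2*t+1)*((1+D*t)*D) \<le> 6*(D^2*t^2)" .
  have dt: "1 \<le> D^2*t^2" using assms by simp
  have c2: "1 + (2*t+1)*((1+D*t)*D) \<le> 7*(D^2*t^2)" using c dt by linarith
  have mt: "1 \<le> m*t^2" using assms by simp
  have d: "4*m*t^2 + 1 \<le> 5*(m*t^2)" using mt by linarith
  have "(1 + (2*t+1)*((1+D*t)*D)) * (4*m*t^2 + 1) \<le> (7*(D^2*t^2)) * (5*(m*t^2))"
    using c2 d by (rule mult_le_mono)
  also have "\<dots> = 35*(m*D^2*t^4)" by (simp add: power_def algebra_simps eval_nat_numeral)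
  finally show ?thesis by simp
qed


lemma D_pos:
  assumes tg: "temporal_graph V E lam" and lt: "lifetime_within E lam tau" and Vne: "V \<noteq> {}"
    and m: "card E \<noteq> 0"
  shows "1 \<le> max_degree V E"
proof -
  have "E \<noteq> {}" using m by auto
  then obtain e where eE: "e \<in> E" by blast
  obtain x z where xz: "x \<in> V" "z \<in> V" "x \<noteq> z" "e = {x,z}" using edges[OF tg lt Vne eE] by blast
  have "z \<in> nbrs E x" using eE xz unfolding nbrs_def by simp
  then have "1 \<le> card (nbrs E x)" using fin_nbrs[OF tg lt Vne, of x]
    by (metis One_nat_def Suc_leI card_gt_0_iff empty_iff)
  also have "\<dots> \<le> max_degree V E" by (rule card_nbrs[OF tg lt Vne])
  finally show ?thesis .
qed

lemma D_zero:
  assumes tg: "temporal_graph V E lam" and lt: "lifetime_within E lam tau" and Vne: "V \<noteq> {}"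
    and m: "card E = 0"
  shows "max_degree V E = 0"
proof -
  have "E = {}" using m finE[OF tg lt Vne] by simp
  then have "\<And>u. nbrs E u = {}" unfolding nbrs_def by simp
  then have "(\<lambda>u. card (nbrs E u)) ` V = {0}" using Vne by auto
  then show ?thesis unfolding max_degree_def by simp
qed

theorem theorem3:
  "\<exists>C::nat. \<forall>(V::'v set) E lam tau s.
     temporal_graph V E lam \<and> lifetime_within E lam tau \<and> 1 \<le> tau \<and> s \<in> V \<longrightarrow>
     (let K = C * (1 + card E * max_degree V E ^ 2 * tau ^ 4) in
       (\<exists>r. call E lam tau K (init_state s) s r) \<and>
       (\<forall>r. call E lam tau K (init_state s) s r \<longrightarrow> r \<noteq> None))"
proof (rule exI[of _ 35], intro allI impI)
  fix V :: "'v set" and E lam tau s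
  assume H: "temporal_graph V E lam \<and> lifetime_within E lam tau \<and> 1 \<le> tau \<and> s \<in> V"
  then have tg: "temporal_graph V E lam" and lt: "lifetime_within E lam tau"
    and t1: "1 \<le> tau" and sV: "s \<in> V" by auto
  have Vne: "V \<noteq> {}" using sV by auto
  define D where "D = max_degree V E"
  define m where "m = card E"
  define e where "e = 2*tau+1"
  define c where "c = 1 + e*((1+D*tau)*D)"
  define K where "K = 35 * (1 + m * D^2 * tau^4)"
  have ce: "e * (card (B u) * card (nbrs E u)) + 1 \<le> c" if I: "Inv E lam B" for B u
  proof -
    have "card (B u) * card (nbrs E u) \<le> (1 + D*tau) * D"
      using B_bound[OF tg lt Vne I, of u] card_nbrs[OF tg lt Vne, of u] unfolding D_def
      by (intro mult_le_mono) auto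
    then have "e * (card (B u) * card (nbrs E u)) \<le> e*((1+D*tau)*D)" by (rule mult_le_mono2)
    then show ?thesis unfolding c_def by simp
  qed
  have ee: "tau + card {t\<in>B v. fst t = Some u} + 1 \<le> e" if I: "Inv E lam B" for B u v
    using group_bound[OF tg lt Vne I, of v u] unfolding e_def by simp
  have ce': "\<forall>B u. Inv E lam B \<longrightarrow> e * (card (B u) * card (nbrs E u)) + 1 \<le> c" using ce by blast
  have ee': "\<forall>B u v. Inv E lam B \<longrightarrow> tau + card {t\<in>B v. fst t = Some u} + 1 \<le> e" using ee by blast
  have I0: "Inv E lam (init_state s)"
    unfolding Inv_def init_state_def achain_def good_trip_def by auto
  have P0: "Pot E lam (init_state s) \<le> 4*m*tau^2"
  proof -
    have "Pot E lam (init_state s) \<le> card (Uset E lam)"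
      unfolding Pot_def using Uset_fin_card[OF tg lt Vne] by (intro card_mono) auto
    then show ?thesis using Uset_fin_card[OF tg lt Vne] unfolding m_def by linarith
  qed
  have KB: "c * Pot E lam (init_state s) + c \<le> K"
  proof (cases "m = 0")
    case True
    then have "D = 0" using D_zero[OF tg lt Vne] unfolding D_def m_def by simp
    then have "c = 1" unfolding c_def by simp
    moreover have "Pot E lam (init_state s) = 0" using P0 True by simp
    ultimately show ?thesis unfolding K_def by simp
  next
    case False
    then have D1: "1 \<le> D" using D_pos[OF tg lt Vne] unfolding D_def m_def by simp
    have m1: "1 \<le> m" using False by simp
    have "c * Pot E lam (init_state s) + c = c * (Pot E lam (init_state s) + 1)" by simp
    also have "\<dots> \<le> c * (4*m*tau^2 + 1)" using P0 by (intro mult_le_mono2) simp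
    also have "\<dots> \<le> K" unfolding c_def e_def K_def using arith_bound[OF D1 m1 t1] .
    finally show ?thesis .
  qed
  have finit: "\<forall>w. finite (init_state s w)" unfolding init_state_def by simp
  have ex: "\<exists>r. call E lam tau K (init_state s) s r"
    using total[OF fin_nbrs[OF tg lt Vne], where k=K and lam=lam and tau=tau] finit by blast
  have nn: "\<forall>r. call E lam tau K (init_state s) s r \<longrightarrow> r \<noteq> None"
  proof (intro allI impI)
    fix r assume "call E lam tau K (init_state s) s r"
    from main(1)[where c=c and e=e and E=E and lam=lam and tau=tau, OF tg lt Vne ce' ee' this I0 KB] show "r \<noteq> None" by auto
  qed
  show "let K = 35 * (1 + card E * max_degree V E ^ 2 * tau ^ 4) in
       (\<exists>r. call E lam tau K (init_state s) s r) \<and>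
       (\<forall>r. call E lam tau K (init_state s) s r \<longrightarrow> r \<noteq> None)"
    unfolding Let_def using ex nn unfolding K_def m_def D_def by blast
qed


end
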